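(* Let $\sigma_B^2=a\,\sigma_A^2$ for a fixed constant $a\in(0,\infty)$. Then for every fixed $r_A>0$, $r_B>0$, as $\sigma_A^2\to0$, $$f_{\hat R_A,\hat R_B}(r_A,r_B)=\frac{2r_Ae^{-r_A^2/p}}{p}\cdot\frac{e^{-\frac{(r_B-r_A)^2}{\sigma_A^2+\sigma_B^2}}}{\sqrt{\pi(\sigma_A^2+\sigma_B^2)}}+O(\sigma_A),$$ i.e. the joint density asymptotically equals the product of a Rayleigh density (of $\hat R_A$, with scale parameter $\sqrt{p/2}$) and a conditional normal density of $\hat R_B$ with mean $r_A$ and variance $(\sigma_A^2+\sigma_B^2)/2$.
   Context: Fix $p>0$. Let $H$ be a zero-mean circularly-symmetric complex Gaussian (ZMCSCG) variable of variance $p$, and $W_A,W_B$ ZMCSCG with variances $\sigma_A^2,\sigma_B^2>0$, mutually independent and independent of $H$. Define $\hat H_A=H+W_A$, $\hat H_B=H+W_B$, envelopes $\hat R_A=|\hat H_A|$, $\hat R_B=|\hat H_B|$, and let $f_{\hat R_A,\hat R_B}$ be the joint density of $(\hat R_A,\hat R_B)$. The notation $O(\cdot)$ refers to a bound $|\cdot|\le\lambda\,\sigma_A$ for some constant $\lambda$ (possibly depending on $r_A,r_B,p,a$) for all sufficiently small $\sigma_A$. *)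

theory Defs
  imports "HOL-Analysis.Analysis"
begin

text \<open>Density (w.r.t. Lebesgue measure on the complex plane, identified with R^2)
  of a zero-mean circularly-symmetric complex Gaussian variable of variance v.\<close>
definition zmcscg_pdf :: "real \<Rightarrow> complex \<Rightarrow> real" where
  "zmcscg_pdf v z = exp (- (cmod z)\<^sup>2 / v) / (pi * v)"

text \<open>Joint density of (Hhat_A, Hhat_B) = (H + W_A, H + W_B) at (x, y), where
  H, W_A, W_B are independent ZMCSCG with variances p, sA2, sB2:
  obtained by conditioning on H = h (independence) and integrating out h.\<close>
definition joint_chan_pdf :: "real \<Rightarrow> real \<Rightarrow> real \<Rightarrow> complex \<Rightarrow> complex \<Rightarrow> real" where
  "joint_chan_pdf p sA2 sB2 x y =
     (LINT h|lborel. zmcscg_pdf p h * zmcscg_pdf sA2 (x - h) * zmcscg_pdf sB2 (y - h))"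

text \<open>Joint density of the envelopes (|Hhat_A|, |Hhat_B|) at (rA, rB):
  polar change of variables in both complex coordinates, integrating out the phases.\<close>
definition envelope_joint_pdf :: "real \<Rightarrow> real \<Rightarrow> real \<Rightarrow> real \<Rightarrow> real \<Rightarrow> real" where
  "envelope_joint_pdf p sA2 sB2 rA rB =
     rA * rB * (LBINT tA=0..2*pi. (LBINT tB=0..2*pi.
        joint_chan_pdf p sA2 sB2 (complex_of_real rA * cis tA) (complex_of_real rB * cis tB)))"

end

theory Submission
  imports Defs "HOL-Probability.Distributions" "HOL-Real_Asymp.Real_Asymp" "HOL-Library.Landau_Symbols"
begin

lemma lborel_complex_eq:
  "lborel = distr (lborel \<Otimes>\<^sub>M lborel) borel (\<lambda>(x,y). Complex x y)"
proof (rule lborel_eqI)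
  fix l u :: complex
  assume lu: "\<And>b. b \<in> Basis \<Longrightarrow> l \<bullet> b \<le> u \<bullet> b"
  have le: "Re l \<le> Re u" "Im l \<le> Im u" using lu[of 1] lu[of \<i>] by (auto simp: Basis_complex_def)
  have [measurable]: "(\<lambda>(x,y). Complex x y) \<in> borel_measurable (lborel \<Otimes>\<^sub>M lborel)"
    by (simp add: case_prod_beta' borel_measurable_complex_iff)
  have "(\<lambda>(x,y). Complex x y) -` box l u \<inter> space (lborel \<Otimes>\<^sub>M lborel) = box (Re l) (Re u) \<times> box (Im l) (Im u)"
    by (auto simp: box_def Basis_complex_def space_pair_measure)
  then have "emeasure (distr (lborel \<Otimes>\<^sub>M lborel) borel (\<lambda>(x,y). Complex x y)) (box l u)
      = emeasure (lborel \<Otimes>\<^sub>M lborel) (box (Re l) (Re u) \<times> box (Im l) (Im u))"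
    by (subst emeasure_distr) auto
  also have "\<dots> = ennreal ((Re u - Re l) * (Im u - Im l))"
    using le by (simp add: lborel.emeasure_pair_measure_Times ennreal_mult)
  finally show "emeasure (distr (lborel \<Otimes>\<^sub>M lborel) borel (\<lambda>(x,y). Complex x y)) (box l u) = (\<Prod>b\<in>Basis. (u - l) \<bullet> b)"
    by (simp add: Basis_complex_def)
qed simp

lemma gauss1:
  fixes c \<mu> :: real assumes c: "c > 0"
  shows "has_bochner_integral lborel (\<lambda>x. exp (- c * (x - \<mu>)\<^sup>2)) (sqrt (pi / c))"
proof -
  define s where "s = 1 / sqrt (2 * c)"
  have s2: "s\<^sup>2 = 1 / (2 * c)" using c by (simp add: s_def power_divide)
  have eq: "exp (- c * (x - \<mu>)\<^sup>2) = sqrt (pi / c) * normal_density \<mu> s x" for x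
  proof -
    have "2 * pi * s\<^sup>2 = pi / c" using c s2 by simp
    moreover have "- (x - \<mu>)\<^sup>2 / (2 * s\<^sup>2) = - c * (x - \<mu>)\<^sup>2" using c s2 by simp
    ultimately show ?thesis using c by (simp add: normal_density_def)
  qed
  have "has_bochner_integral lborel (\<lambda>x. sqrt (pi / c) * normal_density \<mu> s x) (sqrt (pi / c) * 1)"
    using c by (intro has_bochner_integral_mult_right) (simp add: has_bochner_integral_iff s_def)
  then show ?thesis by (simp only: eq mult_1_right)
qed

lemma gauss_complex:
  fixes c :: real and m :: complex assumes c: "c > 0"
  shows "has_bochner_integral lborel (\<lambda>h::complex. exp (- c * (cmod (h - m))\<^sup>2)) (pi / c)"
proof (rule has_bochner_integral_nn_integral)
  let ?e1 = "\<lambda>x. exp (- c * (x - Re m)\<^sup>2)" and ?e2 = "\<lambda>y. exp (- c * (y - Im m)\<^sup>2)"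
  have i1: "(\<integral>\<^sup>+x. ennreal (?e1 x) \<partial>lborel) = ennreal (sqrt (pi / c))"
    using gauss1[OF c, of "Re m"] by (subst nn_integral_eq_integral) (auto simp: has_bochner_integral_iff)
  have i2: "(\<integral>\<^sup>+x. ennreal (?e2 x) \<partial>lborel) = ennreal (sqrt (pi / c))"
    using gauss1[OF c, of "Im m"] by (subst nn_integral_eq_integral) (auto simp: has_bochner_integral_iff)
  have pt: "exp (- c * (cmod (Complex x y - m))\<^sup>2) = ?e1 x * ?e2 y" for x y
    by (simp add: cmod_def exp_add[symmetric] algebra_simps)
  have "(\<integral>\<^sup>+h. ennreal (exp (- c * (cmod (h - m))\<^sup>2)) \<partial>lborel)
      = (\<integral>\<^sup>+z. ennreal (exp (- c * (cmod ((case z of (x,y) \<Rightarrow> Complex x y) - m))\<^sup>2)) \<partial>(lborel \<Otimes>\<^sub>M lborel))"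
    by (subst lborel_complex_eq, subst nn_integral_distr)
       (auto simp: case_prod_beta' borel_measurable_complex_iff)
  also have "\<dots> = (\<integral>\<^sup>+z. ennreal (?e1 (fst z)) * ennreal (?e2 (snd z)) \<partial>(lborel \<Otimes>\<^sub>M lborel))"
    by (intro nn_integral_cong) (auto simp only: pt fst_conv snd_conv split: prod.split intro!: ennreal_mult exp_ge_zero)
  also have "\<dots> = (\<integral>\<^sup>+x. \<integral>\<^sup>+y. ennreal (?e1 x) * ennreal (?e2 y) \<partial>lborel \<partial>lborel)"
    using lborel.nn_integral_fst[where f="\<lambda>z. ennreal (?e1 (fst z)) * ennreal (?e2 (snd z))"] by simp
  also have "\<dots> = (\<integral>\<^sup>+x. ennreal (?e1 x) * ennreal (sqrt (pi / c)) \<partial>lborel)"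
    using i2 by (simp add: nn_integral_cmult)
  also have "\<dots> = ennreal (sqrt (pi / c)) * ennreal (sqrt (pi / c))"
    using i1 by (simp add: nn_integral_multc)
  also have "\<dots> = ennreal (pi / c)"
    using c by (simp add: ennreal_mult[symmetric])
  finally show "(\<integral>\<^sup>+h. ennreal (exp (- c * (cmod (h - m))\<^sup>2)) \<partial>lborel) = ennreal (pi / c)" .
qed (use c in auto)

lemma expo1:
  fixes p vA vB h x y :: real
  assumes p: "p > 0" and A: "vA > 0" and B: "vB > 0"
  defines "D \<equiv> vA * vB + p * (vA + vB)"
  shows "- h\<^sup>2 / p - (x - h)\<^sup>2 / vA - (y - h)\<^sup>2 / vB
       = - ((p + vB) * x\<^sup>2 + (p + vA) * y\<^sup>2 - 2 * p * x * y) / D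
         - D / (p * vA * vB) * (h - p * (vB * x + vA * y) / D)\<^sup>2"
proof -
  have D: "D > 0" using p A B by (simp add: D_def add_pos_pos)
  have "D \<noteq> 0" using D by simp
  then show ?thesis using p A B
    apply (simp add: field_simps power2_eq_square)
    apply (simp add: D_def)
    apply algebra
    done
qed


lemma joint_closed:
  fixes p vA vB :: real and x y :: complex
  assumes p: "p > 0" and A: "vA > 0" and B: "vB > 0"
  defines "D \<equiv> vA * vB + p * (vA + vB)"
  shows "joint_chan_pdf p vA vB x y =
    exp (- ((p + vB) * (cmod x)\<^sup>2 + (p + vA) * (cmod y)\<^sup>2 - 2 * p * (Re x * Re y + Im x * Im y)) / D) / (pi\<^sup>2 * D)"
proof -
  have D: "D > 0" using p A B by (simp add: D_def add_pos_pos)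
  define c where "c = D / (p * vA * vB)"
  have c: "c > 0" using p A B D by (simp add: c_def)
  define m where "m = Complex (p * (vB * Re x + vA * Re y) / D) (p * (vB * Im x + vA * Im y) / D)"
  define Q where "Q = - ((p + vB) * (cmod x)\<^sup>2 + (p + vA) * (cmod y)\<^sup>2 - 2 * p * (Re x * Re y + Im x * Im y)) / D"
  define K where "K = exp Q / (pi ^ 3 * p * vA * vB)"
  have pt: "zmcscg_pdf p h * zmcscg_pdf vA (x - h) * zmcscg_pdf vB (y - h) = K * exp (- c * (cmod (h - m))\<^sup>2)" for h
  proof -
    have e1: "- (Re h)\<^sup>2 / p - (Re x - Re h)\<^sup>2 / vA - (Re y - Re h)\<^sup>2 / vB
       = - ((p + vB) * (Re x)\<^sup>2 + (p + vA) * (Re y)\<^sup>2 - 2 * p * Re x * Re y) / D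
         - c * (Re h - Re m)\<^sup>2"
      using expo1[OF p A B, of "Re h" "Re x" "Re y"] by (simp add: D_def c_def m_def)
    have e2: "- (Im h)\<^sup>2 / p - (Im x - Im h)\<^sup>2 / vA - (Im y - Im h)\<^sup>2 / vB
       = - ((p + vB) * (Im x)\<^sup>2 + (p + vA) * (Im y)\<^sup>2 - 2 * p * Im x * Im y) / D
         - c * (Im h - Im m)\<^sup>2"
      using expo1[OF p A B, of "Im h" "Im x" "Im y"] by (simp add: D_def c_def m_def)
    have "- (cmod h)\<^sup>2 / p - (cmod (x - h))\<^sup>2 / vA - (cmod (y - h))\<^sup>2 / vB
        = Q - c * (cmod (h - m))\<^sup>2"
    proof -
      have "- (cmod h)\<^sup>2 / p - (cmod (x - h))\<^sup>2 / vA - (cmod (y - h))\<^sup>2 / vB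
        = (- (Re h)\<^sup>2 / p - (Re x - Re h)\<^sup>2 / vA - (Re y - Re h)\<^sup>2 / vB)
        + (- (Im h)\<^sup>2 / p - (Im x - Im h)\<^sup>2 / vA - (Im y - Im h)\<^sup>2 / vB)"
        by (simp add: cmod_power2 add_divide_distrib diff_divide_distrib)
      also have "\<dots> = Q - c * (cmod (h - m))\<^sup>2"
        unfolding e1 e2 Q_def using D by (simp add: cmod_power2 field_simps)
      finally show ?thesis .
    qed
    note E = this
    have "zmcscg_pdf p h * zmcscg_pdf vA (x - h) * zmcscg_pdf vB (y - h)
       = exp (- (cmod h)\<^sup>2 / p - (cmod (x - h))\<^sup>2 / vA - (cmod (y - h))\<^sup>2 / vB) / (pi ^ 3 * p * vA * vB)"
    proof -
      have 1: "zmcscg_pdf p h * zmcscg_pdf vA (x - h) * zmcscg_pdf vB (y - h)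
        = exp (- (cmod h)\<^sup>2 / p) * exp (- (cmod (x - h))\<^sup>2 / vA) * exp (- (cmod (y - h))\<^sup>2 / vB) / (pi ^ 3 * p * vA * vB)"
        unfolding zmcscg_pdf_def by (simp add: power3_eq_cube)
      have 2: "exp (- (cmod h)\<^sup>2 / p) * exp (- (cmod (x - h))\<^sup>2 / vA) * exp (- (cmod (y - h))\<^sup>2 / vB)
        = exp (- (cmod h)\<^sup>2 / p - (cmod (x - h))\<^sup>2 / vA - (cmod (y - h))\<^sup>2 / vB)"
        by (simp add: mult_exp_exp)
      show ?thesis unfolding 1 2 ..
    qed
    also have "\<dots> = K * exp (- c * (cmod (h - m))\<^sup>2)"
      unfolding E K_def by (simp add: exp_diff exp_minus field_simps)
    finally show ?thesis .
  qed
  have "has_bochner_integral lborel (\<lambda>h. K * exp (- c * (cmod (h - m))\<^sup>2)) (K * (pi / c))"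
    by (intro has_bochner_integral_mult_right gauss_complex c)
  then have "joint_chan_pdf p vA vB x y = K * (pi / c)"
    unfolding joint_chan_pdf_def pt by (simp add: has_bochner_integral_iff)
  also have "\<dots> = exp Q / (pi\<^sup>2 * D)"
    using p A B D by (simp add: K_def c_def field_simps power2_eq_square power3_eq_cube)
  finally show ?thesis unfolding Q_def .
qed

lemma lbint_shift:
  fixes f :: "real \<Rightarrow> real" and c d T :: real
  assumes cf: "continuous_on UNIV f"
  shows "(LBINT u=c..d. f (u + T)) = (LBINT y=c+T..d+T. f y)"
proof -
  have *: "(LBINT u=c..d. f (u + T)) = (LBINT y=c+T..d+T. f y)" if "c \<le> d" for c d :: real
  proof -
    have "(LBINT u=c..d. 1 *\<^sub>R f (u + T)) = (LBINT y=c+T..d+T. f y)"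
      by (rule interval_integral_substitution_finite[where g="\<lambda>u. u + T" and g'="\<lambda>_. 1", OF that])
         (auto intro!: derivative_eq_intros continuous_on_subset[OF cf])
    then show ?thesis by simp
  qed
  show ?thesis
  proof (cases "c \<le> d")
    case True then show ?thesis by (rule *)
  next
    case False
    then have "(LBINT u=d..c. f (u + T)) = (LBINT y=d+T..c+T. f y)" by (intro *) simp
    then show ?thesis
      by (metis interval_integral_endpoints_reverse)
  qed
qed

lemma lbint_reflect:
  fixes f :: "real \<Rightarrow> real" and a b c :: real
  assumes cf: "continuous_on UNIV f" and "b \<le> c"
  shows "(LBINT t=b..c. f (a - t)) = (LBINT y=a-c..a-b. f y)"
proof -
  have "(LBINT t=b..c. (-1) *\<^sub>R f (a - t)) = (LBINT y=a-b..a-c. f y)"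
    by (rule interval_integral_substitution_finite[where g="\<lambda>t. a - t" and g'="\<lambda>_. -1", OF assms(2)])
       (auto intro!: derivative_eq_intros continuous_on_subset[OF cf])
  then show ?thesis
    by (simp add: interval_lebesgue_integral_uminus interval_integral_endpoints_reverse[of "ereal (a - b)"])
qed

lemma lbint_periodic:
  fixes f :: "real \<Rightarrow> real" and b :: real
  assumes cf: "continuous_on UNIV f" and per: "\<And>t. f (t + 2 * pi) = f t"
  shows "(LBINT y=b..b + 2*pi. f y) = (LBINT y=0..2*pi. f y)"
proof -
  have int: "interval_lebesgue_integrable lborel x y f" for x y :: real
    by (rule interval_integrable_isCont) (use cf in \<open>auto simp: continuous_on_eq_continuous_at\<close>)
  have s1: "(LBINT y=b..0. f y) + (LBINT y=0..2*pi. f y) = (LBINT y=b..2*pi. f y)"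
    using int[of "min b (min 0 (2*pi))" "max b (max 0 (2*pi))"] by (intro interval_integral_sum) (simp add: zero_ereal_def)
  have s2: "(LBINT y=b..2*pi. f y) + (LBINT y=2*pi..b+2*pi. f y) = (LBINT y=b..b+2*pi. f y)"
    using int[of "min b (min (2*pi) (b+2*pi))" "max b (max (2*pi) (b+2*pi))"] by (intro interval_integral_sum) simp
  have s3: "(LBINT y=2*pi..b+2*pi. f y) = (LBINT u=0..b. f (u + 2*pi))"
    using lbint_shift[OF cf, of 0 b "2*pi"] by (simp add: zero_ereal_def)
  also have "\<dots> = (LBINT u=0..b. f u)" by (simp add: per)
  also have "\<dots> = - (LBINT y=b..0. f y)" by (rule interval_integral_endpoints_reverse)
  finally show ?thesis using s1 s2 by simp
qed

lemma lbint_periodic_reflect: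
  fixes f :: "real \<Rightarrow> real" and a :: real
  assumes cf: "continuous_on UNIV f" and per: "\<And>t. f (t + 2 * pi) = f t"
  shows "(LBINT t=0..2*pi. f (a - t)) = (LBINT y=0..2*pi. f y)"
proof -
  have "(LBINT t=0..2*pi. f (a - t)) = (LBINT y=(a - 2*pi)..(a - 2*pi) + 2*pi. f y)"
    using lbint_reflect[OF cf, of 0 "2*pi" a] by (simp add: zero_ereal_def)
  also have "\<dots> = (LBINT y=0..2*pi. f y)" by (rule lbint_periodic[OF cf per])
  finally show ?thesis .
qed

definition Gf :: "real \<Rightarrow> real" where
  "Gf z = (LBINT t=0..2*pi. exp (z * cos t))"

lemma inner_G: "(LBINT tB=0..2*pi. exp (z * cos (tA - tB))) = Gf z"
  unfolding Gf_def
  by (rule lbint_periodic_reflect[where f="\<lambda>u. exp (z * cos u)"])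
     (auto intro!: continuous_intros)

lemma env_closed:
  fixes p vA vB rA rB :: real
  assumes p: "p > 0" and A: "vA > 0" and B: "vB > 0" and rA: "rA > 0" and rB: "rB > 0"
  defines "D \<equiv> vA * vB + p * (vA + vB)"
  shows "envelope_joint_pdf p vA vB rA rB =
    rA * rB * (2 * pi) * (exp (- ((p + vB) * rA\<^sup>2 + (p + vA) * rB\<^sup>2) / D) / (pi\<^sup>2 * D))
      * Gf (2 * p * rA * rB / D)"
proof -
  define C0 where "C0 = exp (- ((p + vB) * rA\<^sup>2 + (p + vA) * rB\<^sup>2) / D) / (pi\<^sup>2 * D)"
  define z where "z = 2 * p * rA * rB / D"
  have pt: "joint_chan_pdf p vA vB (complex_of_real rA * cis tA) (complex_of_real rB * cis tB)
      = C0 * exp (z * cos (tA - tB))" for tA tB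
  proof -
    have "joint_chan_pdf p vA vB (complex_of_real rA * cis tA) (complex_of_real rB * cis tB)
      = exp (- ((p + vB) * rA\<^sup>2 + (p + vA) * rB\<^sup>2 - 2 * p * (rA * rB * cos (tA - tB))) / D) / (pi\<^sup>2 * D)"
      unfolding joint_closed[OF p A B] D_def using rA rB
      by (simp add: norm_mult cos_diff algebra_simps)
    also have "\<dots> = C0 * exp (z * cos (tA - tB))"
    proof -
      have Dp: "D > 0" using p A B by (simp add: D_def add_pos_pos)
      have e: "- ((p + vB) * rA\<^sup>2 + (p + vA) * rB\<^sup>2 - 2 * p * (rA * rB * cos (tA - tB))) / D
         = - ((p + vB) * rA\<^sup>2 + (p + vA) * rB\<^sup>2) / D + z * cos (tA - tB)"
        using Dp by (simp add: z_def field_simps)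
      show ?thesis unfolding e exp_add C0_def by simp
    qed
    finally show ?thesis .
  qed
  show ?thesis
    unfolding envelope_joint_pdf_def pt inner_G interval_lebesgue_integral_mult_right
    by (simp add: C0_def z_def D_def zero_ereal_def)
qed

lemma gauss_half:
  fixes b :: real assumes b: "b > 0"
  shows "has_bochner_integral lborel (\<lambda>s. indicator {0..} s * exp (- b * s\<^sup>2)) (sqrt (pi / b) / 2)"
proof -
  have sb: "sqrt b > 0" using b by simp
  have "has_bochner_integral lborel (\<lambda>x. (\<lambda>x. indicator {0..} x *\<^sub>R exp (- x\<^sup>2)) (0 + sqrt b * x)) ((sqrt pi / 2) /\<^sub>R \<bar>sqrt b\<bar>)"
    using lborel_has_bochner_integral_real_affine_iff[of "sqrt b" "\<lambda>x. indicator {0..} x *\<^sub>R exp (- x\<^sup>2)" "sqrt pi / 2" 0] sb gaussian_moment_0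
    by simp
  moreover have "(\<lambda>x. (\<lambda>x. indicator {0..} x *\<^sub>R exp (- x\<^sup>2)) (0 + sqrt b * x)) = (\<lambda>s. indicator {0..} s * exp (- b * s\<^sup>2))"
  proof
    fix x :: real
    have "(sqrt b * x \<in> {0..}) = (x \<in> {0..})" using sb by (simp add: zero_le_mult_iff)
    moreover have "(sqrt b * x)\<^sup>2 = b * x\<^sup>2" using b by (simp add: power_mult_distrib)
    ultimately show "(\<lambda>x. indicator {0..} x *\<^sub>R exp (- x\<^sup>2)) (0 + sqrt b * x) = indicator {0..} x * exp (- b * x\<^sup>2)"
      by (simp add: indicator_def)
  qed
  moreover have "(sqrt pi / 2) /\<^sub>R \<bar>sqrt b\<bar> = sqrt (pi / b) / 2"
    using sb by (simp add: real_sqrt_divide field_simps)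
  ultimately show ?thesis by simp
qed

definition Hf :: "real \<Rightarrow> real" where
  "Hf z = (LBINT s=0..pi/2. exp (- 2 * z * (sin s)\<^sup>2))"

lemma G_H: "Gf z = 4 * exp z * Hf z"
proof -
  let ?f = "\<lambda>t. exp (z * cos t)"
  have cf: "continuous_on UNIV ?f" by (auto intro!: continuous_intros)
  have int: "interval_lebesgue_integrable lborel x y ?f" for x y :: real
    by (rule interval_integrable_isCont) (auto intro!: continuous_intros)
  have s1: "(LBINT t=0..pi. ?f t) + (LBINT t=pi..2*pi. ?f t) = Gf z"
    unfolding Gf_def
    using int[of 0 "2*pi"] by (intro interval_integral_sum) (simp add: zero_ereal_def)
  have "(LBINT t=pi..2*pi. ?f t) = (LBINT t=pi..2*pi. ?f (2*pi - t))"
    by simp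
  also have "\<dots> = (LBINT y=0..pi. ?f y)"
    using lbint_reflect[OF cf, of pi "2*pi" "2*pi"] by (simp add: zero_ereal_def)
  finally have s2: "(LBINT t=pi..2*pi. ?f t) = (LBINT y=0..pi. ?f y)" .
  have "(LBINT s=ereal 0..ereal (pi/2). 2 *\<^sub>R ?f (2 * s)) = (LBINT y=ereal (2*0)..ereal (2*(pi/2)). ?f y)"
    by (rule interval_integral_substitution_finite[where g="\<lambda>s. 2 * s" and g'="\<lambda>_. 2"])
       (auto intro!: derivative_eq_intros continuous_intros)
  then have s3: "(LBINT y=0..pi. ?f y) = 2 * (LBINT s=0..pi/2. ?f (2 * s))"
    by (simp add: zero_ereal_def)
  have "?f (2 * s) = exp z * exp (- 2 * z * (sin s)\<^sup>2)" for s
    unfolding cos_double_sin mult_exp_exp by (simp add: algebra_simps)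
  then have s4: "(LBINT s=0..pi/2. ?f (2 * s)) = exp z * Hf z"
    unfolding Hf_def by simp
  show ?thesis using s1 s2 s3 s4 by (simp add: algebra_simps)
qed

lemma sin_lower3: fixes s :: real assumes "0 \<le> s" "s \<le> 2" shows "sin s \<ge> s - s^3/6"
proof -
  have eq: "(\<Sum>m<3. sin_coeff m * s ^ m) = s"
    by (simp add: eval_nat_numeral sin_coeff_def)
  have "\<bar>sin s - s\<bar> \<le> inverse (fact 3) * \<bar>s\<bar> ^ 3"
    using Maclaurin_sin_bound[of s 3] unfolding eq .
  moreover have "inverse (fact 3 :: real) = 1/6" by (simp add: eval_nat_numeral)
  moreover have "\<bar>s\<bar> ^ 3 = s ^ 3" using assms by simp
  ultimately have "\<bar>sin s - s\<bar> \<le> s ^ 3 / 6" by simp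
  then show ?thesis by (simp only: abs_le_iff) linarith
qed

lemma sin_facts:
  fixes s :: real assumes s0: "0 \<le> s" and s1: "s \<le> pi/2"
  shows "sin s \<ge> s / 3" "sin s \<le> s" "(sin s)\<^sup>2 \<ge> s\<^sup>2 / 9" "(sin s)\<^sup>2 \<le> s\<^sup>2"
        "s\<^sup>2 - (sin s)\<^sup>2 \<le> s^4 / 3"
proof -
  have s2: "s \<le> 2" using s1 pi_less_4 by simp
  have l3: "sin s \<ge> s - s^3/6" by (rule sin_lower3[OF s0 s2])
  have "s^3 / 6 \<le> 2 * s / 3"
  proof -
    have "s^2 \<le> 2^2" using s0 s2 by (intro power_mono) auto
    then have "s^2 \<le> 4" by simp
    then have "s * s^2 \<le> s * 4" using s0 by (intro mult_left_mono) auto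
    then show ?thesis by (simp add: power3_eq_cube power2_eq_square)
  qed
  then show g: "sin s \<ge> s / 3" using l3 by simp
  show le: "sin s \<le> s" using sin_x_le_x s0 by simp
  have sp: "sin s \<ge> 0" using g s0 by simp
  show "(sin s)\<^sup>2 \<ge> s\<^sup>2 / 9"
  proof -
    have "(s/3)\<^sup>2 \<le> (sin s)\<^sup>2" using g s0 by (intro power_mono) auto
    then show ?thesis by (simp add: power_divide)
  qed
  show "(sin s)\<^sup>2 \<le> s\<^sup>2" using le sp by (intro power_mono) auto
  have p: "s - s^3/6 \<ge> 0" using \<open>s^3 / 6 \<le> 2 * s / 3\<close> s0 by simp
  have "(s - s^3/6)\<^sup>2 \<le> (sin s)\<^sup>2" using l3 p by (intro power_mono) auto
  moreover have "(s - s^3/6)\<^sup>2 = s\<^sup>2 - s^4/3 + s^6/36"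
    by (simp add: power2_eq_square eval_nat_numeral algebra_simps)
  moreover have "s^6 \<ge> 0" using s0 by simp
  ultimately show "s\<^sup>2 - (sin s)\<^sup>2 \<le> s^4 / 3" by linarith
qed

lemma exp_minus_one_le: "(x::real) \<ge> 0 \<Longrightarrow> exp x - 1 \<le> x * exp x"
proof -
  assume "x \<ge> 0"
  have "1 - x \<le> exp (- x)" using exp_ge_add_one_self[of "-x"] by simp
  then have "(1 - x) * exp x \<le> exp (-x) * exp x" by (intro mult_right_mono) auto
  then show ?thesis by (simp add: exp_minus algebra_simps)
qed

lemma quartic_exp:
  fixes b s :: real assumes b: "b > 0" shows "s^4 * exp (- b * s\<^sup>2) \<le> (16 / b\<^sup>2) * exp (- (b/2) * s\<^sup>2)"
proof -
  have "1 + b * s\<^sup>2 / 4 \<le> exp (b * s\<^sup>2 / 4)" by (rule exp_ge_add_one_self)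
  then have "b * s\<^sup>2 / 4 \<le> exp (b * s\<^sup>2 / 4)" by linarith
  then have "(b * s\<^sup>2 / 4)\<^sup>2 \<le> (exp (b * s\<^sup>2 / 4))\<^sup>2" using b by (intro power_mono) auto
  then have "b\<^sup>2 * s^4 / 16 \<le> exp (b * s\<^sup>2 / 2)"
    by (simp add: power_mult_distrib power_divide exp_double[symmetric] power2_eq_square[of "exp _"] mult_exp_exp eval_nat_numeral)
       (simp add: algebra_simps)
  then have "s^4 \<le> (16 / b\<^sup>2) * exp (b * s\<^sup>2 / 2)" using b by (simp add: field_simps)
  then have "s^4 * exp (- b * s\<^sup>2) \<le> (16 / b\<^sup>2) * exp (b * s\<^sup>2 / 2) * exp (- b * s\<^sup>2)"
    by (intro mult_right_mono) auto
  also have "\<dots> = (16 / b\<^sup>2) * exp (- (b/2) * s\<^sup>2)"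
    by (simp add: mult.assoc mult_exp_exp)
  finally show ?thesis .
qed

lemma E_upper_pt:
  fixes z s :: real assumes z: "z > 0" and s0: "0 \<le> s" and s1: "s \<le> pi/2"
  shows "exp (- 2 * z * (sin s)\<^sup>2) \<le> exp (- (2*z) * s\<^sup>2) + (2*z/3) * (16 / (2*z/9)\<^sup>2) * exp (- (z/9) * s\<^sup>2)"
proof -
  note sf = sin_facts[OF s0 s1]
  define x where "x = 2 * z * (s\<^sup>2 - (sin s)\<^sup>2)"
  have x0: "x \<ge> 0" using sf(4) z by (simp add: x_def)
  have x1: "x \<le> 2 * z * (s^4/3)" using sf(5) z by (simp add: x_def)
  define g where "g = exp (- (2*z) * s\<^sup>2)"
  define E where "E = exp (- 2 * z * (sin s)\<^sup>2)"
  have Eg: "E = g * exp x" unfolding E_def g_def x_def mult_exp_exp by (simp add: algebra_simps)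
  have "E - g = g * (exp x - 1)" using Eg by (simp add: algebra_simps)
  also have "\<dots> \<le> g * (x * exp x)" using exp_minus_one_le[OF x0] by (intro mult_left_mono) (auto simp: g_def)
  also have "\<dots> = x * E" using Eg by simp
  also have "\<dots> \<le> (2 * z * (s^4/3)) * E" using x1 by (intro mult_right_mono) (auto simp: E_def)
  also have "\<dots> \<le> (2 * z * (s^4/3)) * exp (- (2*z/9) * s\<^sup>2)"
  proof (intro mult_left_mono)
    show "E \<le> exp (- (2*z/9) * s\<^sup>2)" unfolding E_def using sf(3) z by simp
  qed (use z s0 in auto)
  also have "\<dots> = (2*z/3) * (s^4 * exp (- (2*z/9) * s\<^sup>2))" by simp
  also have "\<dots> \<le> (2*z/3) * ((16 / (2*z/9)\<^sup>2) * exp (- ((2*z/9)/2) * s\<^sup>2))"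
    using quartic_exp[of "2*z/9" s] z by (intro mult_left_mono) auto
  also have "\<dots> = (2*z/3) * (16 / (2*z/9)\<^sup>2) * exp (- (z/9) * s\<^sup>2)" by simp
  finally show ?thesis unfolding E_def g_def by simp
qed

lemma H_bounds:
  fixes z :: real assumes z: "z > 0"
  shows "Hf z \<ge> sqrt (pi/(2*z))/2 - exp (- z * pi\<^sup>2/4) * (sqrt (pi/z)/2)"
    and "Hf z \<le> sqrt (pi/(2*z))/2 + (2*z/3) * (16 / (2*z/9)\<^sup>2) * (sqrt (pi/(z/9))/2)"
    and "Hf z \<ge> 0"
proof -
  let ?I0 = "indicator {0..pi/2} :: real \<Rightarrow> real"
  let ?ind = "indicator {0..} :: real \<Rightarrow> real"
  let ?E = "\<lambda>s. exp (- 2 * z * (sin s)\<^sup>2)"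
  have intE: "integrable lborel (\<lambda>s. ?I0 s * ?E s)"
  proof -
    have "continuous_on {0..pi/2} ?E" by (intro continuous_intros)
    from borel_integrable_atLeastAtMost'[OF this] show ?thesis unfolding set_integrable_def by simp
  qed
  have Hdef: "Hf z = integral\<^sup>L lborel (\<lambda>s. ?I0 s * ?E s)"
    unfolding Hf_def
    by (subst interval_integral_Icc[of 0 "pi/2", simplified zero_ereal_def[symmetric]]) (auto simp: set_lebesgue_integral_def)
  have g1: "has_bochner_integral lborel (\<lambda>s. ?ind s * exp (- (2*z) * s\<^sup>2)) (sqrt (pi/(2*z))/2)"
    using gauss_half[of "2*z"] z by simp
  have g2: "has_bochner_integral lborel (\<lambda>s. ?ind s * exp (- z * s\<^sup>2)) (sqrt (pi/z)/2)"
    using gauss_half[of z] z by simp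
  have g3: "has_bochner_integral lborel (\<lambda>s. ?ind s * exp (- (z/9) * s\<^sup>2)) (sqrt (pi/(z/9))/2)"
    using gauss_half[of "z/9"] z by simp
  show "Hf z \<ge> 0" unfolding Hdef by (rule integral_nonneg_AE) (auto simp: indicator_def)
  let ?C = "exp (- z * pi\<^sup>2/4)"
  have hl: "has_bochner_integral lborel (\<lambda>s. ?ind s * exp (- (2*z) * s\<^sup>2) - ?C * (?ind s * exp (- z * s\<^sup>2)))
      (sqrt (pi/(2*z))/2 - ?C * (sqrt (pi/z)/2))"
    by (intro has_bochner_integral_diff has_bochner_integral_mult_right g1 g2)
  have ptl: "?ind s * exp (- (2*z) * s\<^sup>2) - ?C * (?ind s * exp (- z * s\<^sup>2)) \<le> ?I0 s * ?E s" for s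
  proof (cases "s < 0")
    case True then show ?thesis by (simp add: indicator_def)
  next
    case False
    show ?thesis
    proof (cases "s \<le> pi/2")
      case True
      have "z * (sin s)\<^sup>2 \<le> z * s\<^sup>2" using sin_facts(4)[of s] True False z by (intro mult_left_mono) auto
      then have a: "exp (- (2*z) * s\<^sup>2) \<le> ?E s" by simp
      have b: "?C * exp (- z * s\<^sup>2) \<ge> 0" by simp
      have i1: "?ind s = 1" and i2: "?I0 s = 1" using True False by (auto simp: indicator_def)
      show ?thesis unfolding i1 i2 mult_1_left using a b by linarith
    next
      case False2: False
      have "(pi/2)\<^sup>2 \<le> s\<^sup>2" using False2 by (intro power_mono) auto
      then have "z * (pi\<^sup>2/4) \<le> z * s\<^sup>2" using z by (intro mult_left_mono) (auto simp: power_divide)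
      then have "- (2*z) * s\<^sup>2 \<le> - z * pi\<^sup>2/4 + - z * s\<^sup>2" by (simp add: algebra_simps)
      then have "exp (- (2*z) * s\<^sup>2) \<le> ?C * exp (- z * s\<^sup>2)" by (simp add: mult_exp_exp)
      then show ?thesis using False False2 by (simp add: indicator_def)
    qed
  qed
  show "Hf z \<ge> sqrt (pi/(2*z))/2 - ?C * (sqrt (pi/z)/2)"
  proof -
    have "integral\<^sup>L lborel (\<lambda>s. ?ind s * exp (- (2*z) * s\<^sup>2) - ?C * (?ind s * exp (- z * s\<^sup>2)))
       \<le> integral\<^sup>L lborel (\<lambda>s. ?I0 s * ?E s)"
      by (rule integral_mono[OF integrable.intros[OF hl] intE ptl])
    then show ?thesis unfolding Hdef has_bochner_integral_integral_eq[OF hl] .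
  qed
  let ?M = "(2*z/3) * (16 / (2*z/9)\<^sup>2)"
  have hu: "has_bochner_integral lborel (\<lambda>s. ?ind s * exp (- (2*z) * s\<^sup>2) + ?M * (?ind s * exp (- (z/9) * s\<^sup>2)))
      (sqrt (pi/(2*z))/2 + ?M * (sqrt (pi/(z/9))/2))"
    by (intro has_bochner_integral_add has_bochner_integral_mult_right g1 g3)
  have ptu: "?I0 s * ?E s \<le> ?ind s * exp (- (2*z) * s\<^sup>2) + ?M * (?ind s * exp (- (z/9) * s\<^sup>2))" for s
  proof (cases "s < 0")
    case True then show ?thesis by (simp add: indicator_def)
  next
    case False
    have M0: "?M \<ge> 0" using z by simp
    show ?thesis
    proof (cases "s \<le> pi/2")
      case True
      then show ?thesis using E_upper_pt[OF z _ True] False by (simp add: indicator_def)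
    next
      case False2: False
      have i1: "?ind s = 1" and i2: "?I0 s = 0" using False False2 by (auto simp: indicator_def)
      have "0 \<le> ?M * exp (- (z/9) * s\<^sup>2)" using M0 z by (intro mult_nonneg_nonneg) auto
      moreover have "0 \<le> exp (- (2*z) * s\<^sup>2)" by simp
      ultimately show ?thesis unfolding i1 i2 by simp
    qed
  qed
  show "Hf z \<le> sqrt (pi/(2*z))/2 + ?M * (sqrt (pi/(z/9))/2)"
  proof -
    have "integral\<^sup>L lborel (\<lambda>s. ?I0 s * ?E s) \<le>
      integral\<^sup>L lborel (\<lambda>s. ?ind s * exp (- (2*z) * s\<^sup>2) + ?M * (?ind s * exp (- (z/9) * s\<^sup>2)))"
      by (rule integral_mono[OF intE integrable.intros[OF hu] ptu])
    then show ?thesis unfolding Hdef has_bochner_integral_integral_eq[OF hu] .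
  qed
qed

lemma env_eq:
  fixes p a rA rB s :: real
  assumes p: "p > 0" and a: "a > 0" and rA: "rA > 0" and rB: "rB > 0" and s: "s > 0"
  defines "D \<equiv> s^2 * (a * s^2) + p * (s^2 + a * s^2)"
  defines "z \<equiv> 2 * p * rA * rB / D"
  shows "envelope_joint_pdf p (s\<^sup>2) (a * s\<^sup>2) rA rB =
     8 * rA * rB * exp (- (p * (rB - rA)^2 + a * s^2 * rA^2 + s^2 * rB^2) / D) / (pi * D) * Hf z"
proof -
  have A: "s\<^sup>2 > 0" using s by simp
  have B: "a * s\<^sup>2 > 0" using s a by simp
  have Dp: "D > 0" using A B p by (simp add: D_def add_pos_pos)
  have D': "s\<^sup>2 * (a * s\<^sup>2) + p * (s\<^sup>2 + a * s\<^sup>2) = D" by (simp add: D_def)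
  have e: "- ((p + a * s\<^sup>2) * rA\<^sup>2 + (p + s\<^sup>2) * rB\<^sup>2) / D + z
      = - (p * (rB - rA)^2 + a * s^2 * rA^2 + s^2 * rB^2) / D"
    using Dp by (simp add: z_def field_simps power2_eq_square)
  have "envelope_joint_pdf p (s\<^sup>2) (a * s\<^sup>2) rA rB
     = rA * rB * (2 * pi) * (exp (- ((p + a * s\<^sup>2) * rA\<^sup>2 + (p + s\<^sup>2) * rB\<^sup>2) / D) / (pi\<^sup>2 * D)) * Gf z"
    using env_closed[OF p A B rA rB] unfolding D' z_def by simp
  also have "\<dots> = 8 * rA * rB * (exp (- ((p + a * s\<^sup>2) * rA\<^sup>2 + (p + s\<^sup>2) * rB\<^sup>2) / D) * exp z) / (pi * D) * Hf z"
    unfolding G_H by (simp add: power2_eq_square field_simps)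
  also have "\<dots> = 8 * rA * rB * exp (- (p * (rB - rA)^2 + a * s^2 * rA^2 + s^2 * rB^2) / D) / (pi * D) * Hf z"
    unfolding mult_exp_exp e ..
  finally show ?thesis .
qed

lemma exp_diff_le:
  fixes x y :: real assumes "0 \<le> x" "x \<le> y"
  shows "\<bar>exp (- x) - exp (- y)\<bar> \<le> y - x"
proof -
  have le: "exp (- y) \<le> exp (- x)" using assms by simp
  have "exp (- y) = exp (- x) * exp (- (y - x))" by (simp add: mult_exp_exp)
  then have "exp (- x) - exp (- y) = exp (- x) * (1 - exp (- (y - x)))" by (simp add: algebra_simps)
  also have "\<dots> \<le> 1 * (y - x)"
  proof (rule mult_mono)
    show "exp (- x) \<le> 1" using assms by simp
    have "1 + (- (y - x)) \<le> exp (- (y - x))" by (rule exp_ge_add_one_self)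
    then show "1 - exp (- (y - x)) \<le> y - x" by linarith
    show "0 \<le> 1 - exp (- (y - x))" using assms by simp
  qed simp
  finally show ?thesis using le by simp
qed

lemma inv_sqrt_diff:
  fixes u v :: real assumes "u > 0" "v > 0"
  shows "1 / v - 1 / u = (u\<^sup>2 - v\<^sup>2) / (u * v * (u + v))"
proof -
  have uv: "u + v > 0" "u * v > 0" using assms by auto
  have "u\<^sup>2 - v\<^sup>2 = (u - v) * (u + v)" by (simp add: power2_eq_square algebra_simps)
  then have "(u\<^sup>2 - v\<^sup>2) / (u * v * (u + v)) = (u - v) / (u * v)" using uv by simp
  also have "\<dots> = 1 / v - 1 / u" using assms by (simp add: field_simps)
  finally show ?thesis by simp
qed

lemma eq_case:
  fixes p a r s :: real
  assumes p: "p > 0" and a: "a > 0" and r: "r > 0" and s: "s > 0"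
  defines "D \<equiv> s^2 * (a * s^2) + p * (s^2 + a * s^2)"
  defines "z \<equiv> 2 * p * r * r / D"
  defines "Phi0 \<equiv> 8 * r * r * exp (- ((s^2 + a * s^2) * r^2) / D) / (pi * D)"
  shows "\<bar>Phi0 * Hf z - (2 * r * exp (- r\<^sup>2 / p) / p) * (exp (- (r - r)\<^sup>2 / (s\<^sup>2 + a * s\<^sup>2)) / sqrt (pi * (s\<^sup>2 + a * s\<^sup>2)))\<bar>
    \<le> Phi0 * ((2 * z / 3) * (16 / (2 * z / 9)^2) * (sqrt (pi / (z / 9)) / 2)
              + exp (- z * pi^2 / 4) * (sqrt (pi / z) / 2))
     + ((r^2 * (a * s^4) / (p * D)) * ((2 * r / sqrt (pi * p)) / sqrt D)
        + (2 * r / sqrt (pi * p)) * (a * s^4) / (sqrt D * sqrt (p * (s^2 + a * s^2))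
          * (sqrt D + sqrt (p * (s^2 + a * s^2)))))"
proof -
  define sg where "sg = s^2 + a * s^2"
  have sg: "sg > 0" using s a by (simp add: sg_def add_pos_pos)
  have Dsg: "D = a * s^4 + p * sg" by (simp add: D_def sg_def power4_eq_xxxx power2_eq_square)
  have Dp: "D > 0" using Dsg sg p a s by (simp add: add_pos_pos)
  have zp: "z > 0" using Dp p r by (simp add: z_def)
  define X1 where "X1 = sg * r^2 / D"
  define X2 where "X2 = r^2 / p"
  define W where "W = 2 * r / sqrt (pi * p)"
  define P where "P = W / sqrt D"
  define Qv where "Qv = W / sqrt (p * sg)"
  define S where "S = sqrt (pi / (2 * z)) / 2"
  define U where "U = (2 * z / 3) * (16 / (2 * z / 9)^2) * (sqrt (pi / (z / 9)) / 2)"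
  define L where "L = exp (- z * pi^2 / 4) * (sqrt (pi / z) / 2)"
  have Phi0_nn: "Phi0 \<ge> 0" using Dp r by (simp add: Phi0_def)
  have U0: "U \<ge> 0" using zp by (simp add: U_def)
  have L0: "L \<ge> 0" using zp by (simp add: L_def)
  have HB: "S - L \<le> Hf z" "Hf z \<le> S + U" using H_bounds[OF zp] by (simp_all add: S_def U_def L_def)
  have part1: "\<bar>Phi0 * Hf z - Phi0 * S\<bar> \<le> Phi0 * (U + L)"
  proof -
    have "Phi0 * Hf z - Phi0 * S \<le> Phi0 * (U + L)"
      using mult_left_mono[OF HB(2) Phi0_nn] mult_left_mono[OF L0 Phi0_nn] by (simp add: algebra_simps)
    moreover have "Phi0 * S - Phi0 * Hf z \<le> Phi0 * (U + L)"
      using mult_left_mono[OF HB(1) Phi0_nn] mult_left_mono[OF U0 Phi0_nn] by (simp add: algebra_simps)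
    ultimately show ?thesis by (simp add: abs_le_iff)
  qed
  have a_eq: "Phi0 * S = exp (- X1) * P"
  proof -
    have sq: "sqrt (pi / (2 * z)) = sqrt pi * sqrt D / (2 * r * sqrt p)"
    proof -
      have "pi / (2 * z) = (sqrt pi * sqrt D / (2 * r * sqrt p))\<^sup>2"
        using Dp p r by (simp add: z_def power_divide power_mult_distrib field_simps) (simp add: power2_eq_square)
      then have "sqrt (pi / (2 * z)) = \<bar>sqrt pi * sqrt D / (2 * r * sqrt p)\<bar>" by simp
      then show ?thesis using Dp p r by simp
    qed
    have "Phi0 * S = 8 * r * r * exp (- X1) / (pi * D) * (sqrt pi * sqrt D / (2 * r * sqrt p) / 2)"
      by (simp add: Phi0_def S_def sq X1_def sg_def)
    also have "\<dots> = exp (- X1) * P"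
    proof -
      have "sqrt pi * sqrt pi = pi" by simp
      moreover have "sqrt D * sqrt D = D" using Dp by simp
      ultimately show ?thesis using Dp p r unfolding P_def W_def real_sqrt_mult
        by (simp add: field_simps)
    qed
    finally show ?thesis .
  qed
  have b_eq: "(2 * r * exp (- r\<^sup>2 / p) / p) * (exp (- (r - r)\<^sup>2 / (s\<^sup>2 + a * s\<^sup>2)) / sqrt (pi * (s\<^sup>2 + a * s\<^sup>2)))
      = exp (- X2) * Qv"
  proof -
    have "sqrt p * sqrt p = p" using p by simp
    then show ?thesis using p sg unfolding Qv_def W_def X2_def sg_def[symmetric] real_sqrt_mult
      by (simp add: field_simps)
  qed
  have X12: "0 \<le> X1" "X1 \<le> X2" "X2 - X1 = r^2 * (a * s^4) / (p * D)"
  proof -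
    show "0 \<le> X1" using sg Dp by (simp add: X1_def)
    show eq: "X2 - X1 = r^2 * (a * s^4) / (p * D)"
      using Dp p unfolding X1_def X2_def Dsg by (simp add: field_simps)
    have "r^2 * (a * s^4) / (p * D) \<ge> 0" using Dp p a by simp
    then show "X1 \<le> X2" using eq by simp
  qed
  have d_eq: "Qv - P = W * (a * s^4) / (sqrt D * sqrt (p * sg) * (sqrt D + sqrt (p * sg)))"
  proof -
    have u: "sqrt D > 0" using Dp by simp
    have v: "sqrt (p * sg) > 0" using p sg by simp
    have "Qv - P = W * (1 / sqrt (p * sg) - 1 / sqrt D)" by (simp add: Qv_def P_def algebra_simps)
    also have "\<dots> = W * (((sqrt D)\<^sup>2 - (sqrt (p * sg))\<^sup>2) / (sqrt D * sqrt (p * sg) * (sqrt D + sqrt (p * sg))))"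
      using inv_sqrt_diff[OF u v] by simp
    also have "(sqrt D)\<^sup>2 - (sqrt (p * sg))\<^sup>2 = a * s^4" using Dp p sg Dsg by simp
    finally show ?thesis by simp
  qed
  have W0: "W \<ge> 0" using r p by (simp add: W_def)
  have P0: "P \<ge> 0" using W0 Dp by (simp add: P_def)
  have QP: "Qv - P \<ge> 0" unfolding d_eq using W0 a s Dp p sg by (intro divide_nonneg_pos mult_nonneg_nonneg) (auto intro!: mult_pos_pos add_pos_pos)
  have part2: "\<bar>exp (- X1) * P - exp (- X2) * Qv\<bar> \<le> (X2 - X1) * P + (Qv - P)"
  proof -
    have "exp (- X1) * P - exp (- X2) * Qv = (exp (- X1) - exp (- X2)) * P - exp (- X2) * (Qv - P)"
      by (simp add: algebra_simps)
    also have "\<bar>\<dots>\<bar> \<le> \<bar>exp (- X1) - exp (- X2)\<bar> * P + exp (- X2) * (Qv - P)"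
    proof -
      have "\<bar>(exp (- X1) - exp (- X2)) * P - exp (- X2) * (Qv - P)\<bar>
          \<le> \<bar>(exp (- X1) - exp (- X2)) * P\<bar> + \<bar>exp (- X2) * (Qv - P)\<bar>"
        by (rule abs_triangle_ineq4)
      moreover have "\<bar>(exp (- X1) - exp (- X2)) * P\<bar> = \<bar>exp (- X1) - exp (- X2)\<bar> * P"
        using P0 by (simp add: abs_mult)
      moreover have "\<bar>exp (- X2) * (Qv - P)\<bar> = exp (- X2) * (Qv - P)"
        using QP by (simp add: abs_mult)
      ultimately show ?thesis by simp
    qed
    also have "\<dots> \<le> (X2 - X1) * P + 1 * (Qv - P)"
    proof (rule add_mono)
      show "\<bar>exp (- X1) - exp (- X2)\<bar> * P \<le> (X2 - X1) * P"
        using exp_diff_le[OF X12(1,2)] P0 by (rule mult_right_mono)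
      show "exp (- X2) * (Qv - P) \<le> 1 * (Qv - P)"
        using QP X12 p by (intro mult_right_mono) (auto simp: X2_def)
    qed
    finally show ?thesis by simp
  qed
  have "\<bar>Phi0 * Hf z - exp (- X2) * Qv\<bar> \<le> \<bar>Phi0 * Hf z - Phi0 * S\<bar> + \<bar>exp (- X1) * P - exp (- X2) * Qv\<bar>"
    unfolding a_eq[symmetric] by linarith
  also have "\<dots> \<le> Phi0 * (U + L) + ((X2 - X1) * P + (Qv - P))"
    using part1 part2 by linarith
  finally have fin: "\<bar>Phi0 * Hf z - exp (- X2) * Qv\<bar> \<le> Phi0 * (U + L) + ((X2 - X1) * P + (Qv - P))" .
  have fin2: "\<bar>Phi0 * Hf z - exp (- X2) * Qv\<bar> \<le> Phi0 * (U + L) + (r^2 * (a * s^4) / (p * D) * P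
      + W * (a * s^4) / (sqrt D * sqrt (p * sg) * (sqrt D + sqrt (p * sg))))"
    using fin unfolding X12(3) d_eq .
  show ?thesis
    using fin2 unfolding b_eq U_def L_def P_def W_def sg_def by simp
qed

lemma f1:
  fixes p a rA rB d :: real assumes "p > 0" "a > 0" "rA > 0" "rB > 0" "d > 0"
  shows "(\<lambda>s::real. 8 * rA * rB * exp (- (p * d + a * s^2 * rA^2 + s^2 * rB^2) / (s^2 * (a * s^2) + p * (s^2 + a * s^2)))
     / (pi * (s^2 * (a * s^2) + p * (s^2 + a * s^2)))
     * (sqrt (pi / (2 * (2 * p * rA * rB / (s^2 * (a * s^2) + p * (s^2 + a * s^2))))) / 2
        + (2 * (2 * p * rA * rB / (s^2 * (a * s^2) + p * (s^2 + a * s^2))) / 3)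
          * (16 / (2 * (2 * p * rA * rB / (s^2 * (a * s^2) + p * (s^2 + a * s^2))) / 9)^2)
          * (sqrt (pi / ((2 * p * rA * rB / (s^2 * (a * s^2) + p * (s^2 + a * s^2))) / 9)) / 2)))
     \<in> O[at_right 0](\<lambda>s. s)"
  using assms by real_asymp
lemma f2:
  fixes p a rA rB d :: real assumes "p > 0" "a > 0" "rA > 0" "rB > 0" "d > 0"
  shows "(\<lambda>s::real. (2 * rA * exp (- (rA^2) / p) / p) * (exp (- d / (s^2 + a * s^2)) / sqrt (pi * (s^2 + a * s^2))))
     \<in> O[at_right 0](\<lambda>s. s)"
  using assms by real_asymp
lemma f3:
  fixes p a r :: real assumes "p > 0" "a > 0" "r > 0"
  shows "(\<lambda>s::real. 8 * r * r * exp (- ((s^2 + a * s^2) * r^2) / (s^2 * (a * s^2) + p * (s^2 + a * s^2)))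
     / (pi * (s^2 * (a * s^2) + p * (s^2 + a * s^2)))
     * ((2 * (2 * p * r * r / (s^2 * (a * s^2) + p * (s^2 + a * s^2))) / 3)
          * (16 / (2 * (2 * p * r * r / (s^2 * (a * s^2) + p * (s^2 + a * s^2))) / 9)^2)
          * (sqrt (pi / ((2 * p * r * r / (s^2 * (a * s^2) + p * (s^2 + a * s^2))) / 9)) / 2)
        + exp (- (2 * p * r * r / (s^2 * (a * s^2) + p * (s^2 + a * s^2))) * pi^2 / 4)
          * (sqrt (pi / (2 * p * r * r / (s^2 * (a * s^2) + p * (s^2 + a * s^2)))) / 2)))
     \<in> O[at_right 0](\<lambda>s. s)"
  using assms by real_asymp
lemma f4:
  fixes p a r :: real assumes "p > 0" "a > 0" "r > 0"
  shows "(\<lambda>s::real. (r^2 * (a * s^4) / (p * (s^2 * (a * s^2) + p * (s^2 + a * s^2))))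
      * ((2 * r / sqrt (pi * p)) / sqrt (s^2 * (a * s^2) + p * (s^2 + a * s^2)))
    + (2 * r / sqrt (pi * p)) * (a * s^4) / (sqrt (s^2 * (a * s^2) + p * (s^2 + a * s^2)) * sqrt (p * (s^2 + a * s^2))
        * (sqrt (s^2 * (a * s^2) + p * (s^2 + a * s^2)) + sqrt (p * (s^2 + a * s^2)))))
     \<in> O[at_right 0](\<lambda>s. s)"
  using assms by real_asymp

theorem lemma2:
  fixes p a rA rB :: real
  assumes "p > 0" and "a > 0" and "rA > 0" and "rB > 0"
  shows "\<exists>C::real. \<forall>\<^sub>F sA in at_right 0.
           \<bar>envelope_joint_pdf p (sA\<^sup>2) (a * sA\<^sup>2) rA rB
             - (2 * rA * exp (- rA\<^sup>2 / p) / p)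
               * (exp (- (rB - rA)\<^sup>2 / (sA\<^sup>2 + a * sA\<^sup>2))
                  / sqrt (pi * (sA\<^sup>2 + a * sA\<^sup>2)))\<bar> \<le> C * sA"
proof -
  note pos = assms
  define T where "T sA = (2 * rA * exp (- rA\<^sup>2 / p) / p)
               * (exp (- (rB - rA)\<^sup>2 / (sA\<^sup>2 + a * sA\<^sup>2)) / sqrt (pi * (sA\<^sup>2 + a * sA\<^sup>2)))" for sA :: real
  define env where "env s = envelope_joint_pdf p (s\<^sup>2) (a * s\<^sup>2) rA rB" for s :: real
  obtain B where B: "B \<in> O[at_right 0](\<lambda>s. s)" and Bb: "\<And>s. s > 0 \<Longrightarrow> \<bar>env s - T s\<bar> \<le> B s"
  proof (cases "rA = rB")
    case True
    let ?B = "\<lambda>s::real. 8 * rA * rA * exp (- ((s^2 + a * s^2) * rA^2) / (s^2 * (a * s^2) + p * (s^2 + a * s^2)))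
     / (pi * (s^2 * (a * s^2) + p * (s^2 + a * s^2)))
     * ((2 * (2 * p * rA * rA / (s^2 * (a * s^2) + p * (s^2 + a * s^2))) / 3)
          * (16 / (2 * (2 * p * rA * rA / (s^2 * (a * s^2) + p * (s^2 + a * s^2))) / 9)^2)
          * (sqrt (pi / ((2 * p * rA * rA / (s^2 * (a * s^2) + p * (s^2 + a * s^2))) / 9)) / 2)
        + exp (- (2 * p * rA * rA / (s^2 * (a * s^2) + p * (s^2 + a * s^2))) * pi^2 / 4)
          * (sqrt (pi / (2 * p * rA * rA / (s^2 * (a * s^2) + p * (s^2 + a * s^2)))) / 2))
     + ((rA^2 * (a * s^4) / (p * (s^2 * (a * s^2) + p * (s^2 + a * s^2))))
      * ((2 * rA / sqrt (pi * p)) / sqrt (s^2 * (a * s^2) + p * (s^2 + a * s^2)))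
    + (2 * rA / sqrt (pi * p)) * (a * s^4) / (sqrt (s^2 * (a * s^2) + p * (s^2 + a * s^2)) * sqrt (p * (s^2 + a * s^2))
        * (sqrt (s^2 * (a * s^2) + p * (s^2 + a * s^2)) + sqrt (p * (s^2 + a * s^2)))))"
    show ?thesis
    proof (rule that[of ?B])
      show "?B \<in> O[at_right 0](\<lambda>s. s)"
        by (rule sum_in_bigo(1)[OF f3[OF pos(1,2,3)] f4[OF pos(1,2,3)]])
      fix s :: real assume s: "s > 0"
      have ex: "- (p * (rA - rA)\<^sup>2 + a * s\<^sup>2 * rA\<^sup>2 + s\<^sup>2 * rA\<^sup>2) = - ((s^2 + a * s^2) * rA^2)"
        by (simp add: algebra_simps)
      have E: "env s = 8 * rA * rA * exp (- ((s^2 + a * s^2) * rA^2) / (s^2 * (a * s^2) + p * (s^2 + a * s^2)))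
          / (pi * (s^2 * (a * s^2) + p * (s^2 + a * s^2))) * Hf (2 * p * rA * rA / (s^2 * (a * s^2) + p * (s^2 + a * s^2)))"
        unfolding env_def True[symmetric] env_eq[OF pos(1,2,3,3) s] ex ..
      have T': "T s = (2 * rA * exp (- rA\<^sup>2 / p) / p) * (exp (- (rA - rA)\<^sup>2 / (s\<^sup>2 + a * s\<^sup>2)) / sqrt (pi * (s\<^sup>2 + a * s\<^sup>2)))"
        unfolding T_def True[symmetric] ..
      show "\<bar>env s - T s\<bar> \<le> ?B s"
        using eq_case[OF pos(1,2,3) s] unfolding E T' .
    qed
  next
    case False
    define d where "d = (rB - rA)\<^sup>2"
    have d: "d > 0" using False by (simp add: d_def)
    let ?B = "\<lambda>s::real. 8 * rA * rB * exp (- (p * d + a * s^2 * rA^2 + s^2 * rB^2) / (s^2 * (a * s^2) + p * (s^2 + a * s^2)))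
     / (pi * (s^2 * (a * s^2) + p * (s^2 + a * s^2)))
     * (sqrt (pi / (2 * (2 * p * rA * rB / (s^2 * (a * s^2) + p * (s^2 + a * s^2))))) / 2
        + (2 * (2 * p * rA * rB / (s^2 * (a * s^2) + p * (s^2 + a * s^2))) / 3)
          * (16 / (2 * (2 * p * rA * rB / (s^2 * (a * s^2) + p * (s^2 + a * s^2))) / 9)^2)
          * (sqrt (pi / ((2 * p * rA * rB / (s^2 * (a * s^2) + p * (s^2 + a * s^2))) / 9)) / 2))
     + (2 * rA * exp (- (rA^2) / p) / p) * (exp (- d / (s^2 + a * s^2)) / sqrt (pi * (s^2 + a * s^2)))"
    show ?thesis
    proof (rule that[of ?B])
      show "?B \<in> O[at_right 0](\<lambda>s. s)"
        by (rule sum_in_bigo(1)[OF f1[OF pos d] f2[OF pos d]])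
      fix s :: real assume s: "s > 0"
      define D where "D = s^2 * (a * s^2) + p * (s^2 + a * s^2)"
      define z where "z = 2 * p * rA * rB / D"
      define Phi where "Phi = 8 * rA * rB * exp (- (p * d + a * s^2 * rA^2 + s^2 * rB^2) / D) / (pi * D)"
      have Dp: "D > 0" using s pos by (simp add: D_def add_pos_pos)
      have zp: "z > 0" using Dp pos by (simp add: z_def)
      have Phi0: "Phi \<ge> 0" using Dp pos by (simp add: Phi_def)
      have envs: "env s = Phi * Hf z"
        unfolding env_def env_eq[OF pos s] Phi_def z_def D_def d_def ..
      have Hb: "Hf z \<le> sqrt (pi/(2*z))/2 + (2*z/3) * (16 / (2*z/9)\<^sup>2) * (sqrt (pi/(z/9))/2)" "Hf z \<ge> 0"
        using H_bounds[OF zp] by auto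
      have e0: "env s \<ge> 0" unfolding envs using Phi0 Hb(2) by simp
      have e1: "env s \<le> Phi * (sqrt (pi/(2*z))/2 + (2*z/3) * (16 / (2*z/9)\<^sup>2) * (sqrt (pi/(z/9))/2))"
        unfolding envs using Hb(1) Phi0 by (rule mult_left_mono)
      have T0: "T s \<ge> 0" using pos s by (simp add: T_def)
      have "\<bar>env s - T s\<bar> \<le> env s + T s" using e0 T0 by simp
      also have "\<dots> \<le> Phi * (sqrt (pi/(2*z))/2 + (2*z/3) * (16 / (2*z/9)\<^sup>2) * (sqrt (pi/(z/9))/2)) + T s"
        using e1 by simp
      also have "\<dots> = ?B s"
        unfolding Phi_def z_def D_def T_def d_def by (simp add: power2_eq_square)
      finally show "\<bar>env s - T s\<bar> \<le> ?B s" .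
    qed
  qed
  from B obtain c where c: "c > 0" and ev: "\<forall>\<^sub>F s in at_right 0. norm (B s) \<le> c * norm s"
    by (elim landau_o.bigE)
  have "\<forall>\<^sub>F s in at_right 0. \<bar>env s - T s\<bar> \<le> c * s"
    using ev eventually_at_right_less[of "0::real"]
  proof eventually_elim
    case (elim s)
    have "\<bar>env s - T s\<bar> \<le> B s" using Bb elim(2) by simp
    also have "\<dots> \<le> norm (B s)" by simp
    also have "\<dots> \<le> c * norm s" using elim(1) .
    also have "\<dots> = c * s" using elim(2) by simp
    finally show ?case .
  qed
  then show ?thesis unfolding env_def T_def by blast
qed

end
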